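(* Let $q$ be a power of an odd prime, write $q-1=2^s r$ with $r$ odd, let $a\in\mathbb{F}_q^*$ with $a\neq\pm1$, and let $f(X)=X^{q+1}+aX^2$ on $\mathbb{F}_{q^2}$. Note $f(\mathbb{F}_q)\subseteq\mathbb{F}_q$ and $f|_{\mathbb{F}_q}(x)=(a+1)x^2$. Suppose $\chi_2(1-a^2)=1$. Then the union of the connected components of the functional graph of $f$ over $\mathbb{F}_{q^2}$ that contain elements of $\mathbb{F}_q$ is obtained from the functional graph $\mathscr{G}(f|_{\mathbb{F}_q})$ of $x\mapsto(a+1)x^2$ on $\mathbb{F}_q$ by attaching, to every vertex $\alpha\in\mathbb{F}_q$ with $\chi_2(\alpha(a-1))=-1$, two new vertices each having an edge directed to $\alpha$ (and these new vertices have no preimages). In particular, $0$ is a fixed point whose connected component is $\{0\}$ alone, and $\frac{1}{a+1}$ is a fixed point whose connected component consists, if $s=1$, of $\frac1{a+1}$ together with exactly three other vertices each directed to $\frac{1}{a+1}$ and each having no preimage, and, if $s\ge2$, is isomorphic to $(Cyc(1),\mathscr{T}(s+1))$.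
   Context: $\chi_2$ is the quadratic character of $\mathbb{F}_q$: $\chi_2(\alpha)=1$ if $\alpha$ is a nonzero square, $-1$ if $\alpha$ is a nonsquare, $0$ if $\alpha=0$. The functional graph of a map $g$ on a finite set $S$ is the directed graph with vertex set $S$ and edges $x\to g(x)$. $Cyc(1)$ is a vertex with a loop. $\mathscr{T}(1)$ is the tree with two vertices $P_1,P$ and the edge $P_1\to P$ (root $P$); for $m\ge1$, $\mathscr{T}(m+1)$ is obtained from $\mathscr{T}(m)$ by attaching two new vertices, each with an edge directed to it, to every vertex of the last (top) level of $\mathscr{T}(m)$. $(Cyc(1),\mathscr{T}(m))$ is the fixed vertex with a copy of $\mathscr{T}(m)$ whose root is that vertex. *)

theory Defs
  imports "HOL-Computational_Algebra.Primes"
begin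

definition chi2 :: "'a::field set \<Rightarrow> 'a \<Rightarrow> int" where
  "chi2 K \<alpha> = (if \<alpha> = 0 then 0 else if (\<exists>\<beta>\<in>K. \<beta>^2 = \<alpha>) then 1 else -1)"

definition fg_edges :: "('a \<Rightarrow> 'a) \<Rightarrow> ('a \<times> 'a) set" where
  "fg_edges g = {(x, g x) | x. True}"

definition fg_component :: "('a \<Rightarrow> 'a) \<Rightarrow> 'a \<Rightarrow> 'a set" where
  "fg_component g x = {y. (x, y) \<in> (fg_edges g \<union> (fg_edges g)\<inverse>)\<^sup>*}"

text \<open>Model of (Cyc(1), T(m)): the root is None (with a loop); Some [] is the vertex P_1;
  Some xs (length xs = k) lies at level k+1; each vertex Some xs with length xs < m-1
  has the two children Some (True # xs), Some (False # xs).\<close>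
definition cyc_tree_verts :: "nat \<Rightarrow> bool list option set" where
  "cyc_tree_verts m = insert None {Some xs | xs. length xs < m}"

fun cyc_tree_map :: "bool list option \<Rightarrow> bool list option" where
  "cyc_tree_map None = None"
| "cyc_tree_map (Some []) = None"
| "cyc_tree_map (Some (b # xs)) = Some xs"

definition fg_iso :: "('a \<Rightarrow> 'a) \<Rightarrow> 'a set \<Rightarrow> ('b \<Rightarrow> 'b) \<Rightarrow> 'b set \<Rightarrow> bool" where
  "fg_iso g A h B \<longleftrightarrow> (\<forall>x\<in>A. g x \<in> A) \<and> (\<forall>y\<in>B. h y \<in> B) \<and>
     (\<exists>\<phi>. bij_betw \<phi> A B \<and> (\<forall>x\<in>A. \<phi> (g x) = h (\<phi> x)))"

end

theory Submission
  imports Defs "HOL-Computational_Algebra.Polynomial" "HOL-Number_Theory.Residues"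
begin

lemma ff_fermat:
  fixes x :: "'a::{field,finite}"
  shows "x ^ card (UNIV :: 'a set) = x"
proof (cases "x = 0")
  case False
  have "x * (\<Prod>y\<in>UNIV-{0}. x * y) = x * x ^ (card (UNIV :: 'a set) - 1) * \<Prod>(UNIV-{0})"
    by (simp add: prod.distrib mult_ac)
  also have "x * x ^ (card (UNIV :: 'a set) - 1) = x ^ Suc (card (UNIV :: 'a set) - 1)"
    by (subst power_Suc) auto
  also have "Suc (card (UNIV :: 'a set) - 1) = card (UNIV :: 'a set)"
    using finite_UNIV_card_ge_0[where ?'a = 'a] by simp
  also have "(\<Prod>y\<in>UNIV-{0}. x * y) = (\<Prod>y\<in>UNIV-{0}. y)"
    by (rule prod.reindex_bij_witness[of _ "\<lambda>y. y / x" "\<lambda>y. x * y"]) (use False in auto)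
  finally show ?thesis
    by simp
qed (use finite_UNIV_card_ge_0[where ?'a = 'a] in auto)

lemma ff_fermat1:
  fixes x :: "'a::{field,finite}"
  assumes "x \<noteq> 0"
  shows "x ^ (card (UNIV :: 'a set) - 1) = 1"
proof -
  have c: "card (UNIV :: 'a set) = Suc (card (UNIV :: 'a set) - 1)"
    using finite_UNIV_card_ge_0[where ?'a = 'a] by simp
  have "x ^ (card (UNIV :: 'a set) - 1) * x = 1 * x"
    using ff_fermat[of x] by (subst (asm) c) (simp add: mult.commute)
  thus ?thesis using assms by simp
qed

lemma root_bound:
  fixes z :: "'a::field"
  assumes "k > 0"
  shows "card {x. x ^ k = z} \<le> k"
proof -
  define P where "P = [:-z:] + Polynomial.monom (1::'a) k"
  have dP: "degree P = k" unfolding P_def using assms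
    by (subst degree_add_eq_right) (auto simp: degree_monom_eq)
  have "P \<noteq> 0" using dP assms by auto
  have "{x. x ^ k = z} = {x. poly P x = 0}"
    by (auto simp: P_def poly_monom)
  thus ?thesis using card_poly_roots_bound[OF \<open>P \<noteq> 0\<close>] dP by simp
qed

lemma fibre_count:
  fixes dummy :: "'a::{field,finite}"
  assumes "k > 0" "k dvd card (UNIV :: 'a set) - 1"
  defines "N \<equiv> card (UNIV :: 'a set)"
  shows "\<forall>z::'a. z ^ ((N - 1) div k) = 1 \<longrightarrow> (\<exists>x. x ^ k = z)"
    and "card {x::'a. x ^ k = 1} = k"
proof -
  define m where "m = (N - 1) div k"
  have km: "k * m = N - 1" using assms(2) unfolding m_def N_def by simp
  have N2: "N \<ge> 2" unfolding N_def
  proof -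
    have "card {0::'a, 1} \<le> card (UNIV :: 'a set)" by (rule card_mono) auto
    thus "2 \<le> card (UNIV :: 'a set)" by simp
  qed
  hence "m > 0" using km by (cases m) auto
  define U where "U = (UNIV - {0::'a})"
  define V where "V = {z::'a. z ^ m = 1}"
  define fib where "fib z = {x \<in> U. x ^ k = z}" for z
  have cU: "card U = N - 1" unfolding U_def N_def by (simp add: card_Diff_subset)
  have cV: "card V \<le> m" unfolding V_def using root_bound[OF \<open>m > 0\<close>] .
  have cfib: "card (fib z) \<le> k" for z
  proof -
    have "fib z \<subseteq> {x. x ^ k = z}" by (auto simp: fib_def)
    hence "card (fib z) \<le> card {x. x ^ k = z}" by (intro card_mono) auto
    thus ?thesis using root_bound[OF \<open>k > 0\<close>, of z] by linarith
  qed
  have UV: "U = (\<Union>z\<in>V. fib z)"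
  proof -
    have "(x ^ k) ^ m = 1" if "x \<noteq> 0" for x :: 'a
      using ff_fermat1[OF that] km by (simp add: power_mult[symmetric] N_def)
    thus ?thesis unfolding U_def V_def fib_def by auto
  qed
  have sumeq: "card U = (\<Sum>z\<in>V. card (fib z))"
    unfolding UV by (rule card_UN_disjoint) (auto simp: fib_def)
  have all: "card (fib z) = k" if "z \<in> V" for z
  proof (rule ccontr)
    assume "card (fib z) \<noteq> k"
    hence "card (fib z) < k" using cfib[of z] by simp
    hence "(\<Sum>z\<in>V. card (fib z)) < (\<Sum>z\<in>V. k)"
      using that cfib by (intro sum_strict_mono_ex1) auto
    also have "\<dots> = k * card V" by simp
    also have "\<dots> \<le> k * m" using cV by simp
    finally show False using sumeq cU km by simp
  qed
  show "\<forall>z::'a. z ^ ((N - 1) div k) = 1 \<longrightarrow> (\<exists>x. x ^ k = z)"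
  proof (intro allI impI)
    fix z :: 'a assume "z ^ ((N - 1) div k) = 1"
    hence "z \<in> V" unfolding V_def m_def by simp
    hence "fib z \<noteq> {}" using all[of z] assms(1) by auto
    thus "\<exists>x. x ^ k = z" unfolding fib_def by auto
  qed
  have "1 \<in> V" unfolding V_def by simp
  moreover have "fib 1 = {x. x ^ k = 1}" unfolding fib_def U_def using assms(1) by (auto simp: zero_power)
  ultimately show "card {x::'a. x ^ k = 1} = k" using all[of 1] by simp
qed

lemma char_facts:
  fixes dummy :: "'a::{field,finite}"
  assumes "prime p" "card (UNIV :: 'a set) = p ^ j" "j > 0"
  shows "CHAR('a) = p"
proof -
  have "CHAR('a) > 0" by (rule finite_imp_CHAR_pos) simp
  hence pr: "prime CHAR('a)" by (rule prime_CHAR_semidom)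
  have "CHAR('a) dvd p ^ j" using CHAR_dvd_CARD[where 'a='a] assms(2) by simp
  hence "CHAR('a) dvd p" using pr prime_dvd_power by blast
  thus ?thesis using pr assms(1) by (simp add: primes_dvd_imp_eq)
qed

locale L =
  fixes p n q s r :: nat and a :: "'a::{field,finite}" and f :: "'a \<Rightarrow> 'a" and Fq :: "'a set"
  assumes pp: "prime p" and op: "odd p" and n1: "n \<ge> 1" and qdef: "q = p ^ n"
    and card: "card (UNIV :: 'a set) = q ^ 2"
    and Fqdef: "Fq = {x. x ^ q = x}"
    and qs: "q - 1 = 2 ^ s * r" and oddr: "odd r"
    and aF: "a \<in> Fq" and a0: "a \<noteq> 0" and a1: "a \<noteq> 1" and am1: "a \<noteq> -1"
    and fdef: "f = (\<lambda>x. x ^ (q + 1) + a * x ^ 2)"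
    and chi: "chi2 Fq (1 - a ^ 2) = 1"
begin

lemma CH: "CHAR('a) = p"
  using char_facts[OF pp, where 'a='a and j="2*n"] card n1 qdef by (simp add: power_mult mult.commute)

lemma frob: "(x + y :: 'a) ^ q = x ^ q + y ^ q"
  by (rule freshmans_dream'[of _ n]) (auto simp: CH pp qdef)

lemma two: "(2::'a) \<noteq> 0"
proof
  assume "(2::'a) = 0"
  hence "of_nat 2 = (0::'a)" by simp
  hence "CHAR('a) dvd 2" by (simp only: of_nat_eq_0_iff_char_dvd)
  hence "p dvd 2" using CH by simp
  hence "p \<le> 2" by (simp add: dvd_imp_le)
  moreover have "p \<ge> 2" using pp prime_ge_2_nat by blast
  ultimately show False using op by simp
qed

lemma oddq: "odd q" using op qdef by simp

lemma q3: "q \<ge> 3"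
proof -
  have "p \<ge> 3" using pp op prime_ge_2_nat[OF pp] by (cases "p = 2") auto
  have "p ^ 1 \<le> p ^ n" using power_increasing[of 1 n p] n1 prime_gt_0_nat[OF pp] by simp
  hence "p \<le> p ^ n" by simp
  thus ?thesis using \<open>p \<ge> 3\<close> qdef by simp
qed

lemma s1: "s \<ge> 1"
proof (rule ccontr)
  assume "\<not> s \<ge> 1" hence "s = 0" by simp
  hence "q - 1 = r" using qs by simp
  moreover have "even (q - 1)" using oddq q3 by simp
  ultimately show False using oddr by simp
qed

lemma fermat: "(x::'a) ^ (q * q) = x"
  using ff_fermat[of x] card by (simp add: power2_eq_square)

lemma Fq_iff: "x \<in> Fq \<longleftrightarrow> x ^ q = x" using Fqdef by simp

lemma aq: "a ^ q = a" using aF Fq_iff by simp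

lemma pow_q_twice: "((x::'a) ^ q) ^ q = x"
  using fermat[of x] by (simp add: power_mult[symmetric])

lemma neg_q: "(- (x::'a)) ^ q = - (x ^ q)" using oddq by simp

lemma one_q: "(1::'a) ^ q = 1" by simp

lemma Fq_add: "x ^ q = x \<Longrightarrow> y ^ q = y \<Longrightarrow> (x + y :: 'a) ^ q = x + y" by (simp add: frob)
lemma Fq_mult: "x ^ q = x \<Longrightarrow> y ^ q = y \<Longrightarrow> (x * y :: 'a) ^ q = x * y" by (simp add: power_mult_distrib)
lemma Fq_neg: "x ^ q = x \<Longrightarrow> (- x :: 'a) ^ q = - x" by (simp add: neg_q)
lemma Fq_diff: "x ^ q = x \<Longrightarrow> y ^ q = y \<Longrightarrow> (x - y :: 'a) ^ q = x - y"
  using Fq_add[of x "-y"] Fq_neg[of y] by simp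
lemma Fq_inv: "x ^ q = x \<Longrightarrow> (inverse x :: 'a) ^ q = inverse x" by (simp add: power_inverse)
lemma Fq_div: "x ^ q = x \<Longrightarrow> y ^ q = y \<Longrightarrow> (x / y :: 'a) ^ q = x / y" by (simp add: power_divide)

lemma lemR:
  assumes "(z::'a) ^ q = c * z" "c ^ q = c"
  shows "z = 0 \<or> c ^ 2 = 1"
proof -
  have "z = (z ^ q) ^ q" using pow_q_twice by simp
  also have "\<dots> = c * (c * z)" using assms by (simp add: power_mult_distrib)
  finally have "z * (c ^ 2 - 1) = 0" by (simp add: algebra_simps power2_eq_square)
  thus ?thesis by simp
qed

lemma f_eq: "f z = z ^ q * z + a * z ^ 2"
  by (simp add: fdef)

lemma fq_eq: "(f z) ^ q = z * z ^ q + a * (z ^ q) ^ 2"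
proof -
  have e1: "(z ^ q * z) ^ q = z * z ^ q" by (simp add: power_mult_distrib pow_q_twice)
  have "(z ^ 2) ^ q = (z ^ q) ^ 2" by (simp add: power_mult[symmetric] mult.commute)
  hence e2: "(a * z ^ 2) ^ q = a * (z ^ q) ^ 2" by (simp add: power_mult_distrib aq)
  have "(f z) ^ q = (z ^ q * z) ^ q + (a * z ^ 2) ^ q" by (simp add: f_eq frob)
  thus ?thesis using e1 e2 by simp
qed

lemma P1: assumes "(f z) ^ q = f z" shows "z ^ q = z \<or> z ^ q = - z"
proof -
  have "(z ^ q) ^ 2 = z ^ 2" using assms fq_eq[of z] f_eq[of z] a0 by (simp add: mult.commute)
  thus ?thesis by (simp add: power2_eq_iff)
qed

end

context L
begin

lemma a2: "a ^ 2 \<noteq> 1"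
proof
  assume "a ^ 2 = 1"
  hence "(a - 1) * (a + 1) = 0" by (simp add: algebra_simps power2_eq_square)
  thus False using a1 am1 by (auto simp: add_eq_0_iff2)
qed

lemma bex: obtains b where "b ^ q = b" "b ^ 2 = 1 - a ^ 2"
  using chi unfolding chi2_def Fq_iff by (auto split: if_splits simp: Fq_iff)

lemma f0: "f 0 = 0" by (simp add: fdef)

lemma fF: "z ^ q = z \<Longrightarrow> f z = (a + 1) * z ^ 2"
  by (simp add: f_eq algebra_simps power2_eq_square)

lemma fT: "z ^ q = - z \<Longrightarrow> f z = (a - 1) * z ^ 2"
  by (simp add: f_eq algebra_simps power2_eq_square)

lemma P3: assumes "f z = 0" shows "z = 0"
proof (rule ccontr)
  assume z: "z \<noteq> 0"
  have "z * (z ^ q + a * z) = 0" using assms by (simp add: f_eq algebra_simps power2_eq_square)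
  hence "z ^ q = (- a) * z" using z by (simp add: eq_neg_iff_add_eq_0)
  from lemR[OF this] z have "(-a) ^ 2 = 1" using Fq_neg[OF aq] by simp
  thus False using a2 by simp
qed

lemma P2: assumes "(f z) ^ q = - f z" shows "f z = 0"
proof (cases "z = 0")
  case True thus ?thesis by (simp add: f0)
next
  case z: False
  obtain b where b: "b ^ q = b" "b ^ 2 = 1 - a ^ 2" using bex by blast
  define u where "u = z ^ q"
  have e: "a * u ^ 2 + 2 * u * z + a * z ^ 2 = 0"
    using assms fq_eq[of z] f_eq[of z] unfolding u_def[symmetric]
    by (simp add: algebra_simps power2_eq_square)
  have "(a * u + z) ^ 2 = a * (a * u ^ 2 + 2 * u * z + a * z ^ 2) + (1 - a ^ 2) * z ^ 2"
    by (simp add: algebra_simps power2_eq_square)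
  also have "\<dots> = (b * z) ^ 2" using e b by (simp add: power_mult_distrib)
  finally have "a * u + z = b * z \<or> a * u + z = - (b * z)" by (simp add: power2_eq_iff)
  then obtain c where c: "u = c * z" "c ^ q = c"
  proof
    assume h: "a * u + z = b * z"
    have "u = ((b - 1) / a) * z" using h a0 by (simp add: field_simps)
    moreover have "((b - 1) / a) ^ q = (b - 1) / a" using b aq by (intro Fq_div Fq_diff) auto
    ultimately show ?thesis using that by blast
  next
    assume h: "a * u + z = - (b * z)"
    have "u = ((- b - 1) / a) * z" using h a0 by (simp add: field_simps)
    moreover have "((- b - 1) / a) ^ q = (- b - 1) / a" using b aq by (intro Fq_div Fq_diff Fq_neg) auto
    ultimately show ?thesis using that by blast
  qed
  have "c ^ 2 = 1" using lemR[of z c] c z unfolding u_def by simp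
  have "z ^ 2 * (a * c ^ 2 + 2 * c + a) = 0" using e c by (simp add: algebra_simps power2_eq_square)
  hence "2 * a + 2 * c = 0" using z \<open>c ^ 2 = 1\<close> by simp
  hence "2 * (a + c) = 0" by (simp add: algebra_simps)
  hence "a + c = 0" using two by (simp only: mult_eq_0_iff) simp
  hence "c = - a" by (simp add: add_eq_0_iff2 add.commute)
  hence "a ^ 2 = 1" using \<open>c ^ 2 = 1\<close> by simp
  thus ?thesis using a2 by simp
qed

end

lemma comp_sub:
  assumes "x \<in> B" "\<forall>y\<in>B. g y \<in> B" "\<forall>y. g y \<in> B \<longrightarrow> y \<in> B"
  shows "fg_component g x \<subseteq> B"
proof
  fix y assume "y \<in> fg_component g x"
  hence "(x, y) \<in> (fg_edges g \<union> (fg_edges g)\<inverse>)\<^sup>*" by (simp add: fg_component_def)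
  thus "y \<in> B"
  proof (induction rule: rtrancl_induct)
    case base thus ?case using assms(1) .
  next
    case (step y z)
    from step.hyps(2) have "z = g y \<or> y = g z" by (auto simp: fg_edges_def)
    thus ?case
    proof
      assume "z = g y" thus ?thesis using step.IH assms(2) by simp
    next
      assume "y = g z" hence "g z \<in> B" using step.IH by simp
      thus ?thesis using assms(3) by blast
    qed
  qed
qed

lemma comp_iter:
  assumes "(g ^^ k) y = x"
  shows "y \<in> fg_component g x"
proof -
  let ?S = "fg_edges g \<union> (fg_edges g)\<inverse>"
  have "(y, (g ^^ k) y) \<in> ?S\<^sup>*" for y
  proof (induction k arbitrary: y)
    case 0 thus ?case by simp
  next
    case (Suc k)
    have "(y, g y) \<in> ?S" by (auto simp: fg_edges_def)
    hence "(y, (g ^^ k) (g y)) \<in> ?S\<^sup>*" by (rule converse_rtrancl_into_rtrancl) (rule Suc.IH)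
    thus ?case by (simp only: funpow_Suc_right comp_def)
  qed
  hence "(y, x) \<in> ?S\<^sup>*" using assms by metis
  hence "(x, y) \<in> (?S\<inverse>)\<^sup>*" by (rule rtrancl_converseI)
  moreover have "?S\<inverse> = ?S" by auto
  ultimately show ?thesis by (simp add: fg_component_def)
qed

lemma comp_eq:
  assumes "x \<in> B" "\<forall>y\<in>B. g y \<in> B" "\<forall>y. g y \<in> B \<longrightarrow> y \<in> B" "\<forall>y\<in>B. \<exists>k. (g ^^ k) y = x"
  shows "fg_component g x = B"
proof
  show "fg_component g x \<subseteq> B" by (rule comp_sub[OF assms(1-3)])
  show "B \<subseteq> fg_component g x"
  proof
    fix y assume "y \<in> B"
    then obtain k where "(g ^^ k) y = x" using assms(4) by blast
    thus "y \<in> fg_component g x" by (rule comp_iter)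
  qed
qed

context L
begin

lemma q_decomp: obtains k where "q = 2 * k + 1" using oddq oddE by blast

lemma xq1: "x \<noteq> 0 \<Longrightarrow> x ^ q = x \<Longrightarrow> (x::'a) ^ (q - 1) = 1"
proof -
  assume h: "x \<noteq> 0" "x ^ q = x"
  have "x ^ Suc (q - 1) = x ^ (q - 1) * x" by (rule power_Suc2)
  hence "x ^ q = x ^ (q - 1) * x" using q3 by simp
  thus ?thesis using h by simp
qed

lemma xq1': "(x::'a) ^ (q - 1) = 1 \<Longrightarrow> x ^ q = x"
proof -
  assume h: "x ^ (q - 1) = 1"
  have "x ^ Suc (q - 1) = x ^ (q - 1) * x" by (rule power_Suc2)
  hence "x ^ q = x ^ (q - 1) * x" using q3 by simp
  thus ?thesis using h by simp
qed

lemma sqrt_ex: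
  assumes "(\<beta>::'a) ^ q = \<beta>" "\<beta> \<noteq> 0"
  shows "\<exists>x. x ^ 2 = \<beta>"
proof -
  obtain k where k: "q = 2 * k + 1" using q_decomp .
  have sq: "(2 * k + 1) ^ 2 = 2 * (2 * k * (k + 1)) + 1" by (simp add: power2_eq_square algebra_simps)
  have N: "card (UNIV :: 'a set) - 1 = 2 * (2 * k * (k + 1))" using card k sq by simp
  have "\<beta> ^ (2 * k) = 1" using xq1[OF assms(2,1)] k by simp
  hence "(\<beta> ^ (2 * k)) ^ (k + 1) = 1" by simp
  hence "\<beta> ^ (2 * k * (k + 1)) = 1" by (simp only: power_mult)
  hence "\<beta> ^ ((card (UNIV :: 'a set) - 1) div 2) = 1" unfolding N by (simp only: nonzero_mult_div_cancel_left zero_neq_numeral[symmetric] not_False_eq_True)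
  moreover have dv: "2 dvd card (UNIV :: 'a set) - 1" unfolding N by (rule dvd_triv_left)
  have "\<forall>z::'a. z ^ ((card (UNIV :: 'a set) - 1) div 2) = 1 \<longrightarrow> (\<exists>x. x ^ 2 = z)"
    by (rule fibre_count(1)[where 'a='a, OF _ dv]) simp
  ultimately show ?thesis by blast
qed

definition T where "T = {x::'a. x ^ q = - x \<and> x \<noteq> 0}"

lemma notFq: assumes h1: "x ^ q = - x" and h2: "x \<noteq> 0" shows "(x::'a) ^ q \<noteq> x"
proof
  assume h3: "x ^ q = x"
  have "x + x = x ^ q + x" using h3 by simp
  also have "\<dots> = - x + x" using h1 by simp
  also have "\<dots> = 0" by simp
  finally have "2 * x = 0" by (simp only: mult_2)
  thus False using two h2 by simp
qed

lemma fF_in: assumes "z ^ q = z" shows "(f z) ^ q = f z"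
proof -
  have "(f z) ^ q = z * z ^ q + a * (z ^ q) ^ 2" by (rule fq_eq)
  also have "\<dots> = z ^ q * z + a * z ^ 2" using assms by simp
  also have "\<dots> = f z" by (rule f_eq[symmetric])
  finally show ?thesis .
qed

lemma fT_in: assumes "z ^ q = - z" shows "(f z) ^ q = f z"
proof -
  have "(f z) ^ q = z * z ^ q + a * (z ^ q) ^ 2" by (rule fq_eq)
  also have "\<dots> = z ^ q * z + a * z ^ 2" using assms by simp
  also have "\<dots> = f z" by (rule f_eq[symmetric])
  finally show ?thesis .
qed

lemma C_char: "(\<Union>\<alpha>\<in>Fq. fg_component f \<alpha>) = Fq \<union> T"
proof
  show "(\<Union>\<alpha>\<in>Fq. fg_component f \<alpha>) \<subseteq> Fq \<union> T"
  proof (intro UN_least comp_sub)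
    fix \<alpha> assume "\<alpha> \<in> Fq" thus "\<alpha> \<in> Fq \<union> T" by simp
  next
    show "\<forall>y\<in>Fq \<union> T. f y \<in> Fq \<union> T"
      using fF_in fT_in by (auto simp: Fq_iff T_def)
  next
    show "\<forall>y. f y \<in> Fq \<union> T \<longrightarrow> y \<in> Fq \<union> T"
    proof (intro allI impI)
      fix y assume h: "f y \<in> Fq \<union> T"
      have "f y \<notin> T" using P2 by (auto simp: T_def)
      hence "(f y) ^ q = f y" using h by (simp add: Fq_iff)
      from P1[OF this] show "y \<in> Fq \<union> T" by (cases "y = 0") (auto simp: Fq_iff T_def)
    qed
  qed
next
  show "Fq \<union> T \<subseteq> (\<Union>\<alpha>\<in>Fq. fg_component f \<alpha>)"
  proof
    fix x assume "x \<in> Fq \<union> T"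
    thus "x \<in> (\<Union>\<alpha>\<in>Fq. fg_component f \<alpha>)"
    proof
      assume "x \<in> Fq"
      moreover have "x \<in> fg_component f x" by (rule comp_iter[where k=0]) simp
      ultimately show ?thesis by blast
    next
      assume "x \<in> T"
      hence "f x \<in> Fq" using fT_in by (simp add: T_def Fq_iff)
      moreover have "x \<in> fg_component f (f x)" by (rule comp_iter[where k=1]) simp
      ultimately show ?thesis by blast
    qed
  qed
qed

lemma part3:
  assumes "x \<in> Fq \<union> T" "x \<notin> Fq"
  shows "f x \<in> Fq \<and> chi2 Fq (f x * (a - 1)) = -1 \<and> (\<forall>y. f y \<noteq> x)"
proof -
  have x: "x ^ q = - x" "x \<noteq> 0" using assms by (auto simp: T_def)
  have 1: "f x \<in> Fq" using fT_in[OF x(1)] by (simp add: Fq_iff)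
  have e: "f x * (a - 1) = ((a - 1) * x) ^ 2" unfolding fT[OF x(1)] by (simp add: algebra_simps power2_eq_square)
  have nz: "(a - 1) * x \<noteq> 0" using x a1 by simp
  have "\<not> (\<exists>\<beta>\<in>Fq. \<beta> ^ 2 = ((a - 1) * x) ^ 2)"
  proof
    assume "\<exists>\<beta>\<in>Fq. \<beta> ^ 2 = ((a - 1) * x) ^ 2"
    then obtain \<beta> where \<beta>: "\<beta> ^ q = \<beta>" "\<beta> = (a - 1) * x \<or> \<beta> = - ((a - 1) * x)"
      by (auto simp: Fq_iff power2_eq_iff)
    have am: "(a - 1) ^ q = a - 1" using aq by (intro Fq_diff) auto
    have "x = \<beta> / (a - 1) \<or> x = - \<beta> / (a - 1)" using \<beta>(2) a1 by (auto simp: field_simps)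
    hence "x ^ q = x" using \<beta>(1) am by (auto intro: Fq_div Fq_neg)
    thus False using notFq x by simp
  qed
  hence 2: "chi2 Fq (f x * (a - 1)) = -1" unfolding chi2_def e using nz by simp
  have 3: "\<forall>y. f y \<noteq> x"
  proof (intro allI notI)
    fix y assume "f y = x"
    hence "(f y) ^ q = - f y" using x by simp
    hence "f y = 0" by (rule P2)
    thus False using \<open>f y = x\<close> x by simp
  qed
  show ?thesis using 1 2 3 by simp
qed

lemma part5: "fg_component f 0 = {0}"
  by (rule comp_eq) (auto simp: f0 P3 intro: exI[of _ 0])

lemma a1ne: "a + 1 \<noteq> 0" using am1 by (simp add: add_eq_0_iff2)

lemma part6: "f (1 / (a + 1)) = 1 / (a + 1)"
proof -
  have "(1 / (a + 1)) ^ q = 1 / (a + 1)" using aq by (intro Fq_div Fq_add) auto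
  hence "f (1 / (a + 1)) = (a + 1) * (1 / (a + 1)) ^ 2" by (rule fF)
  thus ?thesis using a1ne by (simp add: power2_eq_square)
qed

end

context L
begin

lemma TFq: "(Fq \<union> T) - Fq = T"
  using notFq by (auto simp: T_def Fq_iff)

lemma sq_Fq: assumes "(y::'a) ^ 2 = \<delta> ^ 2" "\<delta> ^ q = \<delta>" shows "y ^ q = y"
proof -
  have "y = \<delta> \<or> y = - \<delta>" using assms(1) by (simp add: power2_eq_iff)
  thus ?thesis using assms(2) Fq_neg by auto
qed

lemma T_Fq_sq: assumes "x \<in> T" "\<delta> ^ q = \<delta>" shows "x ^ 2 \<noteq> \<delta> ^ 2"
proof
  assume "x ^ 2 = \<delta> ^ 2"
  hence "x ^ q = x" using sq_Fq assms(2) by blast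
  moreover have "x ^ q \<noteq> x" using assms(1) unfolding T_def by (intro notFq) auto
  ultimately show False by contradiction
qed

lemma preim:
  assumes "f y = \<gamma>" "\<gamma> ^ q = \<gamma>" "\<gamma> \<noteq> 0"
  shows "(y ^ q = y \<and> (a + 1) * y ^ 2 = \<gamma>) \<or> (y \<in> T \<and> (a - 1) * y ^ 2 = \<gamma>)"
proof -
  have "(f y) ^ q = f y" using assms by simp
  from P1[OF this] show ?thesis
  proof
    assume "y ^ q = y" thus ?thesis using fF assms(1) by auto
  next
    assume h: "y ^ q = - y"
    have "y \<noteq> 0" using assms f0 by auto
    thus ?thesis using h fT assms(1) by (auto simp: T_def)
  qed
qed

lemma part4:
  assumes "\<alpha> ^ q = \<alpha>"
  shows "card {x \<in> T. f x = \<alpha>} = (if chi2 Fq (\<alpha> * (a - 1)) = -1 then 2 else 0)"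
proof (cases "chi2 Fq (\<alpha> * (a - 1)) = -1")
  case False
  have "{x \<in> T. f x = \<alpha>} = {}"
  proof (rule ccontr)
    assume "{x \<in> T. f x = \<alpha>} \<noteq> {}"
    then obtain x where "x \<in> T" "f x = \<alpha>" by blast
    hence "chi2 Fq (\<alpha> * (a - 1)) = -1" using part3[of x] TFq by auto
    thus False using False by simp
  qed
  thus ?thesis using False by simp
next
  case True
  have nz: "\<alpha> * (a - 1) \<noteq> 0" and nsq: "\<not> (\<exists>\<gamma>\<in>Fq. \<gamma> ^ 2 = \<alpha> * (a - 1))"
    using True unfolding chi2_def by (auto split: if_splits)
  have am: "(a - 1) ^ q = a - 1" using aq by (intro Fq_diff) auto
  have a1': "a - 1 \<noteq> 0" using a1 by simp
  define \<beta> where "\<beta> = \<alpha> / (a - 1)"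
  have \<beta>q: "\<beta> ^ q = \<beta>" unfolding \<beta>_def using assms am by (rule Fq_div)
  have \<beta>0: "\<beta> \<noteq> 0" using nz a1' unfolding \<beta>_def by simp
  obtain t where t: "t ^ 2 = \<beta>" using sqrt_ex[OF \<beta>q \<beta>0] by blast
  have t0: "t \<noteq> 0" using t \<beta>0 by auto
  have "(t ^ q) ^ 2 = (t ^ 2) ^ q" by (simp only: power_mult[symmetric] mult.commute[of q 2])
  hence "(t ^ q) ^ 2 = t ^ 2" using t \<beta>q by simp
  hence "t ^ q = t \<or> t ^ q = - t" by (simp add: power2_eq_iff)
  moreover have "t ^ q \<noteq> t"
  proof
    assume tq: "t ^ q = t"
    have "(t * (a - 1)) ^ q = t * (a - 1)" using tq am by (rule Fq_mult)
    moreover have "(t * (a - 1)) ^ 2 = \<alpha> * (a - 1)"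
      using t a1' unfolding \<beta>_def by (simp add: power_mult_distrib power2_eq_square field_simps)
    ultimately show False using nsq by (auto simp: Fq_iff)
  qed
  ultimately have tq: "t ^ q = - t" by simp
  have tT: "t \<in> T" "- t \<in> T" using tq t0 by (auto simp: T_def neg_q)
  have "{x \<in> T. f x = \<alpha>} = {t, - t}"
  proof (intro equalityI subsetI)
    fix x assume "x \<in> {x \<in> T. f x = \<alpha>}"
    hence x: "x \<in> T" "f x = \<alpha>" by auto
    hence "(a - 1) * x ^ 2 = \<alpha>" using fT by (auto simp: T_def)
    hence "x ^ 2 = \<alpha> / (a - 1)" using a1' by (auto simp: field_simps)
    hence "x ^ 2 = t ^ 2" using t unfolding \<beta>_def by simp
    thus "x \<in> {t, - t}" by (auto simp: power2_eq_iff)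
  next
    fix x assume "x \<in> {t, - t}"
    hence "x \<in> T" "x ^ 2 = \<beta>" using tT t by auto
    moreover hence "f x = \<alpha>" using fT a1' unfolding \<beta>_def by (auto simp: T_def)
    ultimately show "x \<in> {x \<in> T. f x = \<alpha>}" by simp
  qed
  moreover have "t \<noteq> - t"
  proof
    assume "t = - t"
    hence "2 * t = 0" by (metis add_eq_0_iff2 mult_2)
    thus False using two t0 by simp
  qed
  ultimately show ?thesis using True by simp
qed

end

context L
begin

lemma neq_neg: "(y::'a) \<noteq> 0 \<Longrightarrow> y \<noteq> - y"
proof
  assume "y \<noteq> 0" "y = - y"
  hence "y + y = 0" by (metis add.right_inverse)
  hence "2 * y = 0" by (simp only: mult_2)
  thus False using two \<open>y \<noteq> 0\<close> by simp
qed

lemma T_neq_Fq: "x \<in> T \<Longrightarrow> y ^ q = y \<Longrightarrow> x \<noteq> y"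
  using notFq by (auto simp: T_def)

lemma T_neg: "x \<in> T \<Longrightarrow> - x \<in> T"
  by (auto simp: T_def neg_q)

lemma noPreT: "x \<in> T \<Longrightarrow> f y \<noteq> x"
proof
  assume h: "x \<in> T" "f y = x"
  hence "(f y) ^ q = - f y" by (simp add: T_def)
  hence "f y = 0" by (rule P2)
  thus False using h by (simp add: T_def)
qed

lemma m1_nonsq: assumes "s = 1" "(\<beta>::'a) ^ q = \<beta>" shows "\<beta> ^ 2 \<noteq> -1"
proof
  assume h: "\<beta> ^ 2 = -1"
  hence "\<beta> \<noteq> 0" by auto
  hence "\<beta> ^ (q - 1) = 1" using xq1 assms(2) by blast
  moreover have "\<beta> ^ (q - 1) = (\<beta> ^ 2) ^ r" using qs assms(1) by (simp add: power_mult)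
  ultimately have "(-1::'a) ^ r = 1" using h by simp
  hence "(-1::'a) = 1" using oddr by simp
  thus False using two by (simp add: eq_neg_iff_add_eq_0)
qed

lemma cfacts: "(1 / (a + 1)) ^ q = 1 / (a + 1)" "1 / (a + 1) \<noteq> 0" "(a + 1) * (1 / (a + 1)) = 1"
proof -
  have "(a + 1) ^ q = a + 1" by (rule Fq_add[OF aq]) simp
  thus "(1 / (a + 1)) ^ q = 1 / (a + 1)" by (intro Fq_div) simp_all
qed (use a1ne in auto)

lemma tfact: "(a - 1) * (1 / (a ^ 2 - 1)) = 1 / (a + 1)"
proof -
  have "a - 1 \<noteq> 0" using a1 by simp
  moreover have "a ^ 2 - 1 = (a - 1) * (a + 1)" by (simp add: algebra_simps power2_eq_square)
  moreover have "a * a \<noteq> 1" using a2 by (simp add: power2_eq_square)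
  ultimately show ?thesis using a1ne by (simp add: field_simps)
qed

lemma tfact2: "(1 / (a + 1)) / (a - 1) = 1 / (a ^ 2 - 1)"
proof -
  have "a ^ 2 - 1 = (a + 1) * (a - 1)" by (simp add: algebra_simps power2_eq_square)
  thus ?thesis by (simp add: divide_divide_eq_left)
qed

lemma part_s1:
  assumes s: "s = 1"
  defines "c \<equiv> 1 / (a + 1)"
  shows "\<exists>S. fg_component f c = insert c S \<and> c \<notin> S \<and> card S = 3
          \<and> (\<forall>x\<in>S. f x = c \<and> (\<forall>y. f y \<noteq> x))"
proof -
  have cq: "c ^ q = c" and c0: "c \<noteq> 0" and ca: "(a + 1) * c = 1" using cfacts unfolding c_def by auto
  have a1': "a - 1 \<noteq> 0" using a1 by simp
  have a2': "a ^ 2 - 1 \<noteq> 0" using a2 by simp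
  obtain b where b: "b ^ q = b" "b ^ 2 = 1 - a ^ 2" using bex by blast
  have b0: "b \<noteq> 0" using b a2 by auto
  define \<beta> where "\<beta> = 1 / (a ^ 2 - 1)"
  have \<beta>q: "\<beta> ^ q = \<beta>" unfolding \<beta>_def using aq
    by (intro Fq_div Fq_diff Fq_mult) (auto simp: power2_eq_square intro: Fq_mult)
  have \<beta>0: "\<beta> \<noteq> 0" unfolding \<beta>_def using a2' by simp
  obtain t where t: "t ^ 2 = \<beta>" using sqrt_ex[OF \<beta>q \<beta>0] by blast
  have t0: "t \<noteq> 0" using t \<beta>0 by auto
  have "(t ^ q) ^ 2 = (t ^ 2) ^ q" by (simp only: power_mult[symmetric] mult.commute[of q 2])
  hence "(t ^ q) ^ 2 = t ^ 2" using t \<beta>q by simp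
  hence "t ^ q = t \<or> t ^ q = - t" by (simp add: power2_eq_iff)
  moreover have "t ^ q \<noteq> t"
  proof
    assume tq: "t ^ q = t"
    have "(t * b) ^ q = t * b" using tq b(1) by (rule Fq_mult)
    moreover have "(t * b) ^ 2 = -1"
    proof -
      have "(t * b) ^ 2 = t ^ 2 * b ^ 2" by (simp add: power_mult_distrib)
      also have "\<dots> = (1 - a ^ 2) / (a ^ 2 - 1)" using t b(2) unfolding \<beta>_def by simp
      also have "\<dots> = -1" using a2' by (simp add: divide_eq_eq)
      finally show ?thesis .
    qed
    ultimately show False using m1_nonsq[OF s] by blast
  qed
  ultimately have tq: "t ^ q = - t" by simp
  have tT: "t \<in> T" "- t \<in> T" using tq t0 by (auto simp: T_def neg_q)
  have ft: "f t = c" "f (- t) = c" using fT tq neg_q t tfact unfolding \<beta>_def c_def by auto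
  have fc: "f c = c" using part6 unfolding c_def .
  have fmc: "f (- c) = c"
  proof -
    have "f (- c) = (a + 1) * (- c) ^ 2" using cq neg_q by (intro fF) simp
    also have "\<dots> = ((a + 1) * c) * c" by (simp add: power2_eq_square)
    finally show ?thesis using ca by simp
  qed
  have nomc: "f y \<noteq> - c" for y
  proof
    assume h: "f y = - c"
    have "(- c) ^ q = - c" using cq neg_q by simp
    have "- c \<noteq> 0" using c0 by simp
    from preim[OF h \<open>(- c) ^ q = - c\<close> this] show False
    proof (elim disjE conjE)
      assume "y ^ q = y" "(a + 1) * y ^ 2 = - c"
      hence "((a + 1) * y) ^ q = (a + 1) * y" using aq by (intro Fq_mult Fq_add) auto
      moreover have "((a + 1) * y) ^ 2 = (a + 1) * ((a + 1) * y ^ 2)" by (simp add: power2_eq_square)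
      hence "((a + 1) * y) ^ 2 = -1" using \<open>(a + 1) * y ^ 2 = - c\<close> ca by simp
      ultimately show False using m1_nonsq[OF s] by blast
    next
      assume yT: "y \<in> T" and e: "(a - 1) * y ^ 2 = - c"
      have "y ^ 2 = (1 / b) ^ 2"
      proof -
        have "y ^ 2 = - c / (a - 1)" using e a1' by (simp add: field_simps)
        also have "\<dots> = - \<beta>" using tfact2 unfolding \<beta>_def c_def by simp
        also have "\<dots> = (1 / b) ^ 2" unfolding \<beta>_def using b(2) b0 a2' by (simp add: field_simps power2_eq_square)
        finally show ?thesis .
      qed
      moreover have "(1 / b) ^ q = 1 / b" using b(1) by (intro Fq_div) auto
      ultimately show False using T_Fq_sq[OF yT] by blast
    qed
  qed
  define S where "S = {- c, t, - t}"
  have comp: "fg_component f c = insert c S"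
  proof (rule comp_eq)
    show "c \<in> insert c S" by simp
    show "\<forall>y\<in>insert c S. f y \<in> insert c S" using fc fmc ft unfolding S_def by auto
    show "\<forall>y\<in>insert c S. \<exists>k. (f ^^ k) y = c"
    proof
      fix y assume "y \<in> insert c S"
      hence "y = c \<or> f y = c" using fmc ft unfolding S_def by auto
      thus "\<exists>k. (f ^^ k) y = c"
      proof
        assume "y = c" thus ?thesis by (intro exI[of _ 0]) simp
      next
        assume "f y = c" thus ?thesis by (intro exI[of _ 1]) simp
      qed
    qed
    show "\<forall>y. f y \<in> insert c S \<longrightarrow> y \<in> insert c S"
    proof (intro allI impI)
      fix y assume "f y \<in> insert c S"
      hence "f y = c" using nomc noPreT[OF tT(1)] noPreT[OF tT(2)] unfolding S_def by auto
      from preim[OF this cq c0] show "y \<in> insert c S"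
      proof (elim disjE conjE)
        assume h: "(a + 1) * y ^ 2 = c"
        have "((a + 1) * y) ^ 2 = (a + 1) * ((a + 1) * y ^ 2)" by (simp add: power2_eq_square algebra_simps)
        also have "\<dots> = 1" using h ca by simp
        finally have "((a + 1) * y) ^ 2 = 1 ^ 2" by simp
        hence "(a + 1) * y = 1 \<or> (a + 1) * y = - 1" by (simp only: power2_eq_iff)
        hence "y = c \<or> y = - c" unfolding c_def using a1ne by (auto simp: field_simps)
        thus ?thesis unfolding S_def by auto
      next
        assume "(a - 1) * y ^ 2 = c"
        hence "y ^ 2 = c / (a - 1)" using a1' by (simp add: field_simps)
        also have "\<dots> = t ^ 2" using t tfact2 unfolding \<beta>_def c_def by simp
        finally have "y = t \<or> y = - t" by (simp add: power2_eq_iff)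
        thus ?thesis unfolding S_def by auto
      qed
    qed
  qed
  have mcq: "(- c) ^ q = - c" using cq neg_q by simp
  have d1: "c \<noteq> - c" using neq_neg[OF c0] .
  have d2: "t \<noteq> c" "- t \<noteq> c" "t \<noteq> - c" "- t \<noteq> - c"
    using T_neq_Fq[OF tT(1) cq] T_neq_Fq[OF tT(2) cq] T_neq_Fq[OF tT(1) mcq] T_neq_Fq[OF tT(2) mcq] by auto
  have d3: "t \<noteq> - t" using neq_neg[OF t0] .
  have "c \<notin> S" using d1 d2 unfolding S_def by auto
  moreover have "card S = 3" using d2 d3 unfolding S_def by auto
  moreover have "\<forall>x\<in>S. f x = c \<and> (\<forall>y. f y \<noteq> x)"
    using fmc ft nomc noPreT[OF tT(1)] noPreT[OF tT(2)] unfolding S_def by auto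
  ultimately show ?thesis using comp by blast
qed

end

fun bn :: "bool list \<Rightarrow> nat" where
  "bn [] = 0"
| "bn (b # xs) = (if b then 2 ^ length xs else 0) + bn xs"

lemma bn_lt: "bn xs < 2 ^ length xs"
  by (induction xs) auto

lemma bn_inj: "length xs = length ys \<Longrightarrow> bn xs = bn ys \<Longrightarrow> xs = ys"
proof (induction xs arbitrary: ys)
  case Nil thus ?case by simp
next
  case (Cons b xs)
  then obtain c zs where ys: "ys = c # zs" by (cases ys) auto
  have l: "length zs = length xs" using Cons.prems ys by simp
  have e: "(if b then 2 ^ length xs else 0) + bn xs = (if c then 2 ^ length xs else 0) + bn zs"
    using Cons.prems ys l by simp
  have "b = c"
  proof (rule ccontr)
    assume "b \<noteq> c"
    thus False using e bn_lt[of xs] bn_lt[of zs] l by (cases b) auto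
  qed
  hence "bn xs = bn zs" using e by simp
  hence "xs = zs" using Cons.IH l by simp
  thus ?case using ys \<open>b = c\<close> by simp
qed

definition ex :: "nat \<Rightarrow> bool list \<Rightarrow> nat" where
  "ex m xs = 2 ^ (m - 1 - length xs) * (2 * bn xs + 1)"

lemma ex_pos: "ex m xs > 0" by (simp add: ex_def)

lemma ex_lt: assumes "length xs < m" shows "ex m xs < 2 ^ m"
proof -
  have "2 * bn xs + 1 < 2 ^ Suc (length xs)" using bn_lt[of xs] by simp
  hence "ex m xs < 2 ^ (m - 1 - length xs) * 2 ^ Suc (length xs)"
    unfolding ex_def by (intro mult_strict_left_mono) auto
  also have "\<dots> = 2 ^ (m - 1 - length xs + Suc (length xs))" by (simp only: power_add)
  also have "m - 1 - length xs + Suc (length xs) = m" using assms by simp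
  finally show ?thesis .
qed

lemma dummy_unused: True by simp

lemma pow2odd_inj: "2 ^ a * (2 * x + 1) = 2 ^ b * (2 * y + (1::nat)) \<Longrightarrow> a = b \<and> x = y"
proof (induction a arbitrary: b)
  case 0
  show ?case
  proof (cases b)
    case 0 thus ?thesis using "0.prems" by simp
  next
    case (Suc b')
    have "2 * x + 1 = 2 * (2 ^ b' * (2 * y + 1))" using "0.prems" Suc by simp
    hence False by presburger
    thus ?thesis ..
  qed
next
  case (Suc a)
  show ?case
  proof (cases b)
    case 0
    have "2 * (2 ^ a * (2 * x + 1)) = 2 * y + 1" using Suc.prems 0 by simp
    hence False by presburger
    thus ?thesis ..
  next
    case (Suc b')
    hence "2 ^ a * (2 * x + 1) = 2 ^ b' * (2 * y + 1)" using Suc.prems by simp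
    thus ?thesis using Suc.IH Suc by simp
  qed
qed

lemma ex_inj:
  assumes "length xs < m" "length ys < m" "ex m xs = ex m ys"
  shows "xs = ys"
proof -
  from pow2odd_inj[OF assms(3)[unfolded ex_def]]
  have "m - 1 - length xs = m - 1 - length ys" "bn xs = bn ys" by auto
  hence "length xs = length ys" using assms(1,2) by simp
  thus ?thesis using bn_inj \<open>bn xs = bn ys\<close> by blast
qed

lemma ex_nil: "m \<ge> 1 \<Longrightarrow> 2 * ex m [] = 2 ^ m"
  by (simp add: ex_def flip: power_Suc)

lemma ex_step:
  assumes "length (b # xs) < m"
  shows "2 * ex m (b # xs) = (if b then 2 ^ m else 0) + ex m xs"
proof -
  have "length xs + 2 \<le> m" using assms by simp
  then obtain j where m: "m = length xs + 2 + j" using le_Suc_ex by blast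
  show ?thesis unfolding ex_def m
    by (simp add: power_add algebra_simps)
qed

lemma pow2_odd_decomp: "t > (0::nat) \<Longrightarrow> \<exists>v w. t = 2 ^ v * w \<and> odd w"
proof (induction t rule: less_induct)
  case (less t)
  show ?case
  proof (cases "odd t")
    case True thus ?thesis by (intro exI[of _ 0] exI[of _ t]) simp
  next
    case False
    then obtain t' where t: "t = 2 * t'" by blast
    hence "t' < t" "t' > 0" using less.prems by auto
    then obtain v w where "t' = 2 ^ v * w" "odd w" using less.IH by blast
    thus ?thesis using t by (intro exI[of _ "Suc v"] exI[of _ w]) simp
  qed
qed

lemma card_lists_lt: "card {xs :: bool list. length xs < m} = 2 ^ m - 1"
proof (induction m)
  case 0 thus ?case by simp
next
  case (Suc m)
  have eq: "{xs :: bool list. length xs < Suc m} = {xs. length xs < m} \<union> {xs. length xs = m}" by auto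
  have f1: "finite {xs :: bool list. length xs < m}"
    using finite_lists_length_le[of "UNIV :: bool set" m] by (rule rev_finite_subset) auto
  have c2: "card {xs :: bool list. length xs = m} = 2 ^ m"
    using card_lists_length_eq[of "UNIV :: bool set" m] by simp
  have f2: "finite {xs :: bool list. length xs = m}"
    using finite_lists_length_eq[of "UNIV :: bool set" m] by simp
  have "card {xs :: bool list. length xs < Suc m} = (2 ^ m - 1) + 2 ^ m"
    unfolding eq using f1 f2 Suc.IH c2 by (subst card_Un_disjoint) auto
  also have "\<dots> = 2 ^ Suc m - 1" by simp
  finally show ?case .
qed

lemma card_tree: "card (cyc_tree_verts m) = 2 ^ m"
proof -
  have SE: "{Some xs | xs :: bool list. length xs < m} = Some ` {xs :: bool list. length xs < m}" by auto
  have "card (Some ` {xs :: bool list. length xs < m}) = card {xs :: bool list. length xs < m}"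
    by (rule card_image) simp
  hence "card {Some xs | xs :: bool list. length xs < m} = 2 ^ m - 1"
    using card_lists_lt[of m] by (simp only: SE)
  moreover have "finite {Some xs | xs :: bool list. length xs < m}"
  proof -
    have "finite {xs :: bool list. length xs < m}"
      using finite_lists_length_le[of "UNIV :: bool set" m] by (rule rev_finite_subset) auto
    thus ?thesis by (simp only: SE finite_imageI)
  qed
  ultimately show ?thesis unfolding cyc_tree_verts_def by (simp add: card_insert_if)
qed

context L
begin

lemma qsplit: "card (UNIV :: 'a set) - 1 = (q - 1) * (q + 1)"
proof -
  obtain k where k: "q = 2 * k + 1" using q_decomp .
  have sq: "(2 * k + 1) ^ 2 = 2 * (2 * k * (k + 1)) + 1" by (simp add: power2_eq_square algebra_simps)
  have "card (UNIV :: 'a set) - 1 = 2 * (2 * k * (k + 1))" using card k sq by simp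
  also have "\<dots> = (q - 1) * (q + 1)" using k by (simp add: algebra_simps)
  finally show ?thesis .
qed

lemma zeta_ex: obtains \<zeta> :: 'a where "\<zeta> ^ (2 ^ (s + 1)) = 1" "\<zeta> ^ (2 ^ s) = -1"
proof -
  have "2 ^ s dvd q - 1" using qs by simp
  moreover have "2 dvd q + 1" using oddq by simp
  ultimately have "2 ^ s * 2 dvd (q - 1) * (q + 1)" by (rule mult_dvd_mono)
  hence dv: "2 ^ (s + 1) dvd card (UNIV :: 'a set) - 1"
    by (simp only: qsplit Suc_eq_plus1[symmetric] power_Suc2)
  have c1: "card {x::'a. x ^ (2 ^ (s + 1)) = 1} = 2 ^ (s + 1)"
    by (rule fibre_count(2)[OF _ dv]) simp
  have c2: "card {x::'a. x ^ (2 ^ s) = 1} \<le> 2 ^ s" by (rule root_bound) simp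
  have "\<not> {x::'a. x ^ (2 ^ (s + 1)) = 1} \<subseteq> {x::'a. x ^ (2 ^ s) = 1}"
  proof
    assume "{x::'a. x ^ (2 ^ (s + 1)) = 1} \<subseteq> {x::'a. x ^ (2 ^ s) = 1}"
    hence "card {x::'a. x ^ (2 ^ (s + 1)) = 1} \<le> card {x::'a. x ^ (2 ^ s) = 1}"
      by (intro card_mono) auto
    moreover have "(2::nat) ^ (s + 1) = 2 * 2 ^ s" by simp
    moreover have "(0::nat) < 2 ^ s" by simp
    ultimately show False using c1 c2 by linarith
  qed
  then obtain \<zeta> :: 'a where z: "\<zeta> ^ (2 ^ (s + 1)) = 1" "\<zeta> ^ (2 ^ s) \<noteq> 1" by blast
  have "(\<zeta> ^ (2 ^ s)) ^ 2 = 1" using z(1) by (simp add: power_mult[symmetric] mult.commute)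
  hence "\<zeta> ^ (2 ^ s) = 1 \<or> \<zeta> ^ (2 ^ s) = -1" by (simp add: power2_eq_1_iff)
  thus ?thesis using z(2) that z(1) by auto
qed

lemma zeta_dvd:
  assumes z: "\<zeta> ^ (2 ^ (s + 1)) = 1" "\<zeta> ^ (2 ^ s) = (-1::'a)" and t: "\<zeta> ^ t = 1"
  shows "2 ^ (s + 1) dvd t"
proof (rule ccontr)
  assume nd: "\<not> 2 ^ (s + 1) dvd t"
  define t' where "t' = t mod 2 ^ (s + 1)"
  have "t = 2 ^ (s + 1) * (t div 2 ^ (s + 1)) + t'" unfolding t'_def by simp
  hence "\<zeta> ^ t = (\<zeta> ^ (2 ^ (s + 1))) ^ (t div 2 ^ (s + 1)) * \<zeta> ^ t'"
    by (metis power_add power_mult)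
  hence t1: "\<zeta> ^ t' = 1" using z(1) t by simp
  have "t' > 0" using nd unfolding t'_def by (simp add: dvd_eq_mod_eq_0)
  have "t' < 2 ^ (s + 1)" unfolding t'_def by simp
  obtain v w where vw: "t' = 2 ^ v * w" "odd w" using pow2_odd_decomp[OF \<open>t' > 0\<close>] by blast
  have "2 ^ v \<le> t'" using vw \<open>t' > 0\<close> by (cases w) auto
  hence "2 ^ v < (2::nat) ^ (s + 1)" using \<open>t' < 2 ^ (s + 1)\<close> by linarith
  hence "v < s + 1" by (rule power_less_imp_less_exp[rotated]) simp
  hence "v \<le> s" by simp
  have "\<zeta> ^ (2 ^ s * w) = (\<zeta> ^ t') ^ (2 ^ (s - v))"
  proof -
    have "2 ^ s * w = t' * 2 ^ (s - v)" using vw \<open>v \<le> s\<close>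
      by (simp add: algebra_simps flip: power_add)
    thus ?thesis by (simp add: power_mult)
  qed
  also have "\<dots> = 1" using t1 by simp
  finally have "(\<zeta> ^ (2 ^ s)) ^ w = 1" by (simp add: power_mult)
  hence "(-1::'a) ^ w = 1" using z(2) by simp
  hence "(-1::'a) = 1" using vw(2) by simp
  thus False using two by (simp add: eq_neg_iff_add_eq_0)
qed

lemma zeta_inj:
  assumes z: "\<zeta> ^ (2 ^ (s + 1)) = 1" "\<zeta> ^ (2 ^ s) = (-1::'a)"
    and e: "e1 < 2 ^ (s + 1)" "e2 < 2 ^ (s + 1)" "\<zeta> ^ e1 = \<zeta> ^ e2"
  shows "e1 = e2"
proof -
  have z0: "\<zeta> \<noteq> 0" using z(1) by (auto simp: power_0_left)
  have "\<zeta> ^ (max e1 e2 - min e1 e2) = 1"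
  proof -
    have "\<zeta> ^ (max e1 e2 - min e1 e2) * \<zeta> ^ (min e1 e2) = \<zeta> ^ (max e1 e2)"
      by (simp flip: power_add)
    also have "\<dots> = \<zeta> ^ (min e1 e2)" using e(3) by (simp add: max_def min_def)
    finally show ?thesis using z0 by simp
  qed
  from zeta_dvd[OF z this] have "2 ^ (s + 1) dvd max e1 e2 - min e1 e2" .
  moreover have "max e1 e2 - min e1 e2 < 2 ^ (s + 1)" using e(1,2) by linarith
  ultimately have "max e1 e2 - min e1 e2 = 0" by (metis dvd_imp_le not_less neq0_conv)
  thus ?thesis by linarith
qed

end

locale L2 = L +
  fixes \<zeta> d :: "'a::{field,finite}"
  assumes s2: "s \<ge> 2" and z1: "\<zeta> ^ (2 ^ (s + 1)) = 1" and z2: "\<zeta> ^ (2 ^ s) = -1"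
    and dq: "d ^ q = d" and d0: "d \<noteq> 0" and dc: "(a - 1) * d ^ 2 = 1 / (a + 1)"
begin

definition cc where "cc = 1 / (a + 1)"
definition E where "E y = (if y ^ q = y then cc * y else d * y)"
definition Q where "Q = {y::'a. y ^ (2 ^ (s + 1)) = 1}"
definition Phi where "Phi v = (case v of None \<Rightarrow> cc | Some xs \<Rightarrow> E (\<zeta> ^ ex (s + 1) xs))"

lemma ccq: "cc ^ q = cc" and cc0: "cc \<noteq> 0" and cca: "(a + 1) * cc = 1"
  using cfacts unfolding cc_def by auto

lemma Q0: "y \<in> Q \<Longrightarrow> y \<noteq> 0"
  unfolding Q_def by (auto simp: power_0_left)

lemma Qpow: "(y::'a) ^ (q - 1) = (y ^ (2 ^ s)) ^ r"
  using qs by (simp add: power_mult)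

lemma Qw: "y \<in> Q \<Longrightarrow> y ^ (2 ^ s) = 1 \<or> y ^ (2 ^ s) = -1"
proof -
  assume "y \<in> Q"
  hence "(y ^ (2 ^ s)) ^ 2 = 1" unfolding Q_def by (simp add: power_mult[symmetric] mult.commute)
  thus ?thesis by (simp add: power2_eq_1_iff)
qed

lemma Qf1: assumes "y \<in> Q" "y ^ q = y" shows "y ^ (2 ^ s) = 1"
proof (rule ccontr)
  assume "y ^ (2 ^ s) \<noteq> 1"
  hence "y ^ (2 ^ s) = -1" using Qw[OF assms(1)] by simp
  hence "y ^ (q - 1) = -1" using Qpow oddr by simp
  moreover have "y ^ (q - 1) = 1" using xq1 Q0[OF assms(1)] assms(2) by blast
  ultimately have "(-1::'a) = 1" by simp
  thus False using two by (simp add: eq_neg_iff_add_eq_0)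
qed

lemma Qf2: assumes "y \<in> Q" "y ^ q \<noteq> y" shows "y ^ q = - y"
proof -
  have "y ^ (2 ^ s) \<noteq> 1"
  proof
    assume "y ^ (2 ^ s) = 1"
    hence "y ^ (q - 1) = 1" using Qpow by simp
    thus False using xq1' assms(2) by blast
  qed
  hence "y ^ (2 ^ s) = -1" using Qw[OF assms(1)] by simp
  hence h: "y ^ (q - 1) = -1" using Qpow oddr by simp
  have "y ^ Suc (q - 1) = y ^ (q - 1) * y" by (rule power_Suc2)
  hence "y ^ q = y ^ (q - 1) * y" using q3 by simp
  thus ?thesis using h by simp
qed

lemma Qpm: "y \<in> Q \<Longrightarrow> y ^ q = y \<or> y ^ q = - y"
  using Qf2 by blast

lemma sq_q: "((y::'a) ^ 2) ^ q = (y ^ q) ^ 2"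
  by (simp only: power_mult[symmetric] mult.commute[of q 2])

lemma Qsq: assumes "y \<in> Q" shows "y ^ 2 \<in> Q" "(y ^ 2) ^ q = y ^ 2"
proof -
  have "(y ^ 2) ^ (2 ^ (s + 1)) = (y ^ (2 ^ (s + 1))) ^ 2"
    by (simp only: power_mult[symmetric] mult.commute[of 2])
  thus "y ^ 2 \<in> Q" using assms unfolding Q_def by simp
  show "(y ^ 2) ^ q = y ^ 2" using Qpm[OF assms] sq_q[of y] by auto
qed

lemma Qpow_closed: assumes "y \<in> Q" shows "y ^ k \<in> Q"
proof -
  have "(y ^ k) ^ (2 ^ (s + 1)) = (y ^ (2 ^ (s + 1))) ^ k"
    by (simp only: power_mult[symmetric] mult.commute[of k])
  thus ?thesis using assms unfolding Q_def by simp
qed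

lemma E_Fq: "y ^ q = y \<Longrightarrow> E y = cc * y" by (simp add: E_def)

lemma fE: assumes "y \<in> Q" shows "f (E y) = E (y ^ 2)"
proof -
  have E2: "E (y ^ 2) = cc * y ^ 2" using Qsq(2)[OF assms] by (simp add: E_def)
  show ?thesis
  proof (cases "y ^ q = y")
    case True
    hence "(cc * y) ^ q = cc * y" using ccq by (rule Fq_mult[rotated])
    hence "f (cc * y) = (a + 1) * (cc * y) ^ 2" by (rule fF)
    also have "\<dots> = ((a + 1) * cc) * cc * y ^ 2" by (simp add: power2_eq_square algebra_simps)
    finally show ?thesis using True E2 cca by (simp add: E_def)
  next
    case False
    hence yq: "y ^ q = - y" using Qf2 assms by blast
    have "(d * y) ^ q = - (d * y)" using dq yq by (simp add: power_mult_distrib)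
    hence "f (d * y) = (a - 1) * (d * y) ^ 2" by (rule fT)
    also have "\<dots> = ((a - 1) * d ^ 2) * y ^ 2" by (simp add: power_mult_distrib)
    finally show ?thesis using False E2 dc by (simp add: E_def cc_def)
  qed
qed

lemma E_inj: assumes "E y1 = E y2" shows "y1 = y2"
proof -
  have mixed: False if h: "y1 ^ q = y1" "y2 ^ q \<noteq> y2" "cc * y1 = d * y2" for y1 y2
  proof -
    have "y2 = (cc * y1) / d" using h(3) d0 by (simp add: field_simps)
    moreover have "((cc * y1) / d) ^ q = (cc * y1) / d" using ccq h(1) dq by (intro Fq_div Fq_mult)
    ultimately show False using h(2) by simp
  qed
  show ?thesis
  proof (cases "y1 ^ q = y1"; cases "y2 ^ q = y2")
    assume "y1 ^ q = y1" "y2 ^ q = y2" thus ?thesis using assms cc0 by (simp add: E_def)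
  next
    assume h: "y1 ^ q = y1" "y2 ^ q \<noteq> y2"
    hence "cc * y1 = d * y2" using assms by (simp add: E_def)
    thus ?thesis using mixed h by blast
  next
    assume h: "y1 ^ q \<noteq> y1" "y2 ^ q = y2"
    hence "cc * y2 = d * y1" using assms by (simp add: E_def)
    thus ?thesis using mixed h by blast
  next
    assume "y1 ^ q \<noteq> y1" "y2 ^ q \<noteq> y2" thus ?thesis using assms d0 by (simp add: E_def)
  qed
qed

lemma E1: "E 1 = cc" by (simp add: E_def)

lemma fEk: "y \<in> Q \<Longrightarrow> (f ^^ k) (E y) = E (y ^ (2 ^ k))"
proof (induction k)
  case 0 thus ?case by simp
next
  case (Suc k)
  have "(f ^^ Suc k) (E y) = f ((f ^^ k) (E y))" by simp
  also have "\<dots> = f (E (y ^ (2 ^ k)))" using Suc by simp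
  also have "\<dots> = E ((y ^ (2 ^ k)) ^ 2)" using fE Qpow_closed[OF Suc.prems] by blast
  also have "(y ^ (2 ^ k)) ^ 2 = y ^ (2 ^ Suc k)" by (simp add: power_mult[symmetric] mult.commute)
  finally show ?case .
qed

end

lemma tree_mem: "v \<in> cyc_tree_verts m \<longleftrightarrow> v = None \<or> (\<exists>xs. v = Some xs \<and> length xs < m)"
  unfolding cyc_tree_verts_def by auto

lemma tree_map_closed: "v \<in> cyc_tree_verts m \<Longrightarrow> cyc_tree_map v \<in> cyc_tree_verts m"
proof -
  assume "v \<in> cyc_tree_verts m"
  then consider "v = None" | xs where "v = Some xs" "length xs < m" unfolding tree_mem by blast
  thus ?thesis
  proof cases
    case 1 thus ?thesis by (simp add: tree_mem)
  next
    case 2 thus ?thesis by (cases xs) (auto simp: tree_mem)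
  qed
qed

context L2
begin

lemma zQ: "\<zeta> \<in> Q" using z1 by (simp add: Q_def)

lemma compQ: "fg_component f cc = E ` Q"
proof (rule comp_eq)
  show "cc \<in> E ` Q" using E1 image_eqI[of cc E 1 Q] by (simp add: Q_def)
  show "\<forall>y\<in>E ` Q. f y \<in> E ` Q" using fE Qsq(1) by blast
  show "\<forall>y\<in>E ` Q. \<exists>k. (f ^^ k) y = cc"
  proof
    fix x assume "x \<in> E ` Q"
    then obtain y where y: "y \<in> Q" "x = E y" by blast
    have "(f ^^ (s + 1)) x = E (y ^ (2 ^ (s + 1)))" unfolding y(2) by (rule fEk[OF y(1)])
    also have "\<dots> = cc" using y(1) E1 by (simp add: Q_def)
    finally show "\<exists>k. (f ^^ k) x = cc" by blast
  qed
  show "\<forall>z. f z \<in> E ` Q \<longrightarrow> z \<in> E ` Q"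
  proof (intro allI impI)
    fix z assume "f z \<in> E ` Q"
    then obtain y where y: "y \<in> Q" "f z = E y" by blast
    have y0: "y \<noteq> 0" using Q0[OF y(1)] .
    show "z \<in> E ` Q"
    proof (cases "y ^ q = y")
      case False
      hence yq: "y ^ q = - y" using Qf2 y(1) by blast
      have "d * y \<in> T" using yq dq d0 y0 by (simp add: T_def power_mult_distrib)
      moreover have "f z = d * y" using y(2) False by (simp add: E_def)
      ultimately show ?thesis using noPreT by blast
    next
      case True
      have y2s: "y ^ (2 ^ s) = 1" using Qf1[OF y(1) True] .
      have inQ: "w \<in> Q" if "w ^ 2 = y" for w
      proof -
        have "w ^ (2 ^ (s + 1)) = (w ^ 2) ^ (2 ^ s)" by (simp add: power_mult[symmetric] mult.commute)
        thus ?thesis using that y2s by (simp add: Q_def)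
      qed
      have fz: "f z = cc * y" using y(2) True by (simp add: E_def)
      have gq: "(cc * y) ^ q = cc * y" using ccq True by (rule Fq_mult)
      have g0: "cc * y \<noteq> 0" using cc0 y0 by simp
      from preim[OF fz gq g0] show ?thesis
      proof (elim disjE conjE)
        assume zq: "z ^ q = z" and e: "(a + 1) * z ^ 2 = cc * y"
        define w where "w = z / cc"
        have "z ^ 2 = ((a + 1) * cc) * z ^ 2" using cca by simp
        also have "\<dots> = cc * ((a + 1) * z ^ 2)" by (simp only: mult.commute mult.left_commute)
        also have "\<dots> = cc * (cc * y)" using e by simp
        finally have "z ^ 2 = cc * (cc * y)" .
        hence w2: "w ^ 2 = y" unfolding w_def using cc0 by (simp add: power_divide power2_eq_square)
        have wq: "w ^ q = w" unfolding w_def using zq ccq by (rule Fq_div)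
        have "E w = z" using wq cc0 unfolding E_def w_def by simp
        thus ?thesis using inQ[OF w2] by blast
      next
        assume zT: "z \<in> T" and e: "(a - 1) * z ^ 2 = cc * y"
        define w where "w = z / d"
        have "(a - 1) * z ^ 2 = ((a - 1) * d ^ 2) * y" using e dc unfolding cc_def by simp
        hence "z ^ 2 = d ^ 2 * y" using a1 by simp
        hence w2: "w ^ 2 = y" unfolding w_def using d0 by (simp add: power_divide)
        have zq: "z ^ q = - z" "z \<noteq> 0" using zT by (auto simp: T_def)
        have "w ^ q = - w" unfolding w_def using zq dq by (simp add: power_divide)
        moreover have "w \<noteq> 0" unfolding w_def using zq d0 by simp
        ultimately have "w ^ q \<noteq> w" using notFq by blast
        hence "E w = z" using d0 unfolding E_def w_def by simp
        thus ?thesis using inQ[OF w2] by blast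
      qed
    qed
  qed
qed

abbreviation "tree \<equiv> cyc_tree_verts (s + 1)"

lemma Phi_in: "v \<in> tree \<Longrightarrow> Phi v \<in> E ` Q"
proof -
  assume "v \<in> tree"
  have "cc \<in> E ` Q" using E1 image_eqI[of cc E 1 Q] by (simp add: Q_def)
  moreover have "E (\<zeta> ^ e) \<in> E ` Q" for e using Qpow_closed[OF zQ] by blast
  ultimately show ?thesis by (cases v) (auto simp: Phi_def)
qed

lemma zeta_ex_ne1: "length xs < s + 1 \<Longrightarrow> \<zeta> ^ ex (s + 1) xs \<noteq> 1"
proof
  assume l: "length xs < s + 1" and "\<zeta> ^ ex (s + 1) xs = 1"
  hence "2 ^ (s + 1) dvd ex (s + 1) xs" using zeta_dvd z1 z2 by blast
  hence "2 ^ (s + 1) \<le> ex (s + 1) xs" using ex_pos by (rule dvd_imp_le)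
  thus False using ex_lt[OF l] by simp
qed

lemma Phi_inj: "inj_on Phi tree"
proof (rule inj_onI)
  fix v1 v2 assume v: "v1 \<in> tree" "v2 \<in> tree" and e: "Phi v1 = Phi v2"
  have noneSome: False if "length xs < s + 1" "cc = E (\<zeta> ^ ex (s + 1) xs)" for xs
  proof -
    have "E 1 = E (\<zeta> ^ ex (s + 1) xs)" using that E1 by simp
    hence "\<zeta> ^ ex (s + 1) xs = 1" using E_inj by metis
    thus False using zeta_ex_ne1 that(1) by blast
  qed
  show "v1 = v2"
  proof (cases v1)
    case None
    show ?thesis
    proof (cases v2)
      case None thus ?thesis using \<open>v1 = None\<close> by simp
    next
      case (Some ys)
      thus ?thesis using None e v noneSome by (auto simp: Phi_def tree_mem)
    qed
  next
    case (Some xs)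
    show ?thesis
    proof (cases v2)
      case None
      have lx: "length xs < s + 1" using v(1) \<open>v1 = Some xs\<close> by (simp add: tree_mem)
      have "cc = E (\<zeta> ^ ex (s + 1) xs)" using e \<open>v1 = Some xs\<close> None by (simp add: Phi_def)
      thus ?thesis using noneSome[OF lx] by blast
    next
      case (Some ys)
      have lx: "length xs < s + 1" using v(1) \<open>v1 = Some xs\<close> by (simp add: tree_mem)
      have ly: "length ys < s + 1" using v(2) Some by (simp add: tree_mem)
      have "E (\<zeta> ^ ex (s + 1) xs) = E (\<zeta> ^ ex (s + 1) ys)" using e \<open>v1 = Some xs\<close> Some by (simp add: Phi_def)
      hence "\<zeta> ^ ex (s + 1) xs = \<zeta> ^ ex (s + 1) ys" by (rule E_inj)
      hence "ex (s + 1) xs = ex (s + 1) ys" using zeta_inj[OF z1 z2 ex_lt[OF lx] ex_lt[OF ly]] by blast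
      hence "xs = ys" using ex_inj lx ly by blast
      thus ?thesis using \<open>v1 = Some xs\<close> Some by simp
    qed
  qed
qed

lemma zeta_sq: "(\<zeta> ^ e) ^ 2 = \<zeta> ^ (2 * e)"
  by (simp add: power_mult[symmetric] mult.commute)

lemma Phi_comm: assumes "v \<in> tree" shows "Phi (cyc_tree_map v) = f (Phi v)"
proof -
  consider "v = None" | "v = Some []" | b xs where "v = Some (b # xs)" "length (b # xs) < s + 1"
    using assms unfolding tree_mem by (metis list.exhaust)
  thus ?thesis
  proof cases
    case 1 thus ?thesis using part6 by (simp add: Phi_def cc_def)
  next
    case 2
    have "f (Phi v) = E ((\<zeta> ^ ex (s + 1) []) ^ 2)" using 2 fE Qpow_closed[OF zQ] by (simp add: Phi_def)
    also have "\<dots> = E (\<zeta> ^ (2 ^ (s + 1)))" unfolding zeta_sq using ex_nil[of "s + 1"] by simp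
    also have "\<dots> = cc" using z1 E1 by simp
    finally show ?thesis using 2 by (simp add: Phi_def)
  next
    case 3
    have "f (Phi v) = E ((\<zeta> ^ ex (s + 1) (b # xs)) ^ 2)" using 3 fE Qpow_closed[OF zQ] by (simp add: Phi_def)
    also have "\<dots> = E (\<zeta> ^ ((if b then 2 ^ (s + 1) else 0) + ex (s + 1) xs))"
      unfolding zeta_sq using ex_step[OF 3(2)] by simp
    also have "\<zeta> ^ ((if b then 2 ^ (s + 1) else 0) + ex (s + 1) xs) = \<zeta> ^ ex (s + 1) xs"
      using z1 by (simp add: power_add)
    finally show ?thesis using 3 by (simp add: Phi_def)
  qed
qed

lemma Phi_image: "Phi ` tree = E ` Q"
proof (rule card_subset_eq)
  show "finite (E ` Q)" by simp
  show "Phi ` tree \<subseteq> E ` Q" using Phi_in by blast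
  have "card (Phi ` tree) = 2 ^ (s + 1)" using Phi_inj card_tree by (simp add: card_image)
  moreover have "card (E ` Q) \<le> 2 ^ (s + 1)"
  proof -
    have "card (E ` Q) \<le> card Q" by (rule card_image_le) simp
    also have "card Q \<le> 2 ^ (s + 1)" unfolding Q_def by (rule root_bound) simp
    finally show ?thesis .
  qed
  moreover have "card (Phi ` tree) \<le> card (E ` Q)"
    using \<open>Phi ` tree \<subseteq> E ` Q\<close> by (intro card_mono) auto
  ultimately show "card (Phi ` tree) = card (E ` Q)" by linarith
qed

lemma iso: "fg_iso f (fg_component f cc) cyc_tree_map tree"
  unfolding fg_iso_def compQ
proof (intro conjI)
  show "\<forall>x\<in>E ` Q. f x \<in> E ` Q" using fE Qsq(1) by blast
  show "\<forall>y\<in>tree. cyc_tree_map y \<in> tree" using tree_map_closed by blast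
  have bij: "bij_betw Phi tree (E ` Q)" using Phi_inj Phi_image by (simp add: bij_betw_def)
  define \<phi> where "\<phi> = inv_into tree Phi"
  have "bij_betw \<phi> (E ` Q) tree" unfolding \<phi>_def using bij by (rule bij_betw_inv_into)
  moreover have "\<forall>x\<in>E ` Q. \<phi> (f x) = cyc_tree_map (\<phi> x)"
  proof
    fix x assume "x \<in> E ` Q"
    hence "x \<in> Phi ` tree" using Phi_image by simp
    then obtain v where v: "v \<in> tree" "x = Phi v" by blast
    have "\<phi> x = v" unfolding \<phi>_def v(2) using Phi_inj v(1) by (rule inv_into_f_f)
    moreover have "\<phi> (f x) = cyc_tree_map v"
    proof -
      have "f x = Phi (cyc_tree_map v)" using Phi_comm v by simp
      thus ?thesis unfolding \<phi>_def using Phi_inj tree_map_closed[OF v(1)] by (simp add: inv_into_f_f)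
    qed
    ultimately show "\<phi> (f x) = cyc_tree_map (\<phi> x)" by simp
  qed
  ultimately show "\<exists>\<phi>. bij_betw \<phi> (E ` Q) tree \<and> (\<forall>x\<in>E ` Q. \<phi> (f x) = cyc_tree_map (\<phi> x))" by blast
qed

end

context L
begin

lemma d_ex:
  assumes s2: "s \<ge> 2"
  obtains d where "d ^ q = d" "d \<noteq> 0" "(a - 1) * d ^ 2 = 1 / (a + 1)"
proof -
  have m1q: "(-1::'a) ^ q = -1" using oddq by simp
  obtain i where i: "i ^ 2 = (-1::'a)" using sqrt_ex[OF m1q] by auto
  have "q - 1 = 2 * (2 ^ (s - 1) * r)" using qs s2
    by (metis (no_types) mult.assoc power_eq_if not_numeral_le_zero le_zero_eq power_Suc Suc_pred' zero_less_iff_neq_zero)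
  hence "i ^ (q - 1) = (i ^ 2) ^ (2 ^ (s - 1) * r)" by (simp add: power_mult)
  also have "\<dots> = 1" using i s2 by (simp add: power_mult)
  finally have iq: "i ^ q = i" by (rule xq1')
  obtain b where b: "b ^ q = b" "b ^ 2 = 1 - a ^ 2" using bex by blast
  have b0: "b \<noteq> 0" using b a2 by auto
  have i0: "i \<noteq> 0" using i by auto
  define d where "d = 1 / (i * b)"
  have dq: "d ^ q = d" unfolding d_def using iq b(1) by (intro Fq_div Fq_mult) simp_all
  have d0: "d \<noteq> 0" unfolding d_def using i0 b0 by simp
  have "d ^ 2 = 1 / (i ^ 2 * b ^ 2)" unfolding d_def by (simp add: power_divide power_mult_distrib)
  also have "\<dots> = 1 / (a ^ 2 - 1)" using i b(2) by simp
  finally have "(a - 1) * d ^ 2 = 1 / (a + 1)" using tfact by simp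
  thus ?thesis using that dq d0 by blast
qed

end

theorem theorem22:
  fixes p n q s r :: nat and a :: "'a::{field,finite}" and f :: "'a \<Rightarrow> 'a"
    and Fq :: "'a set" and C :: "'a set"
  assumes "prime p" and "odd p" and "n \<ge> 1" and "q = p ^ n"
    and "card (UNIV :: 'a set) = q ^ 2"
    and "Fq = {x. x ^ q = x}"
    and "q - 1 = 2 ^ s * r" and "odd r"
    and "a \<in> Fq" and "a \<noteq> 0" and "a \<noteq> 1" and "a \<noteq> -1"
    and "f = (\<lambda>x. x ^ (q + 1) + a * x ^ 2)"
    and "chi2 Fq (1 - a ^ 2) = 1"
    and "C = (\<Union>\<alpha>\<in>Fq. fg_component f \<alpha>)"
  shows "f ` Fq \<subseteq> Fq \<and> (\<forall>x\<in>Fq. f x = (a + 1) * x ^ 2)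
    \<and> (\<forall>x\<in>C - Fq. f x \<in> Fq \<and> chi2 Fq (f x * (a - 1)) = -1 \<and> (\<forall>y. f y \<noteq> x))
    \<and> (\<forall>\<alpha>\<in>Fq. card {x\<in>C - Fq. f x = \<alpha>} = (if chi2 Fq (\<alpha> * (a - 1)) = -1 then 2 else 0))
    \<and> f 0 = 0 \<and> fg_component f 0 = {0}
    \<and> f (1 / (a + 1)) = 1 / (a + 1)
    \<and> (s = 1 \<longrightarrow> (\<exists>S. fg_component f (1 / (a + 1)) = insert (1 / (a + 1)) S
          \<and> 1 / (a + 1) \<notin> S \<and> card S = 3
          \<and> (\<forall>x\<in>S. f x = 1 / (a + 1) \<and> (\<forall>y. f y \<noteq> x))))
    \<and> (s \<ge> 2 \<longrightarrow> fg_iso f (fg_component f (1 / (a + 1))) cyc_tree_map (cyc_tree_verts (s + 1)))"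
proof -
  have hL: "L p n q s r a f Fq" by (intro L.intro) (fact assms)+
  interpret L p n q s r a f Fq by (rule hL)
  have Ceq: "C = Fq \<union> T" by (simp only: assms(15) C_char)
  have g1: "f ` Fq \<subseteq> Fq"
  proof (rule image_subsetI)
    fix x assume "x \<in> Fq" thus "f x \<in> Fq" using fF_in by (simp add: Fq_iff)
  qed
  have g2: "\<forall>x\<in>Fq. f x = (a + 1) * x ^ 2" using fF by (simp add: Fq_iff)
  have g3: "\<forall>x\<in>C - Fq. f x \<in> Fq \<and> chi2 Fq (f x * (a - 1)) = -1 \<and> (\<forall>y. f y \<noteq> x)"
  proof
    fix x assume "x \<in> C - Fq"
    hence "x \<in> Fq \<union> T" "x \<notin> Fq" using Ceq by auto
    thus "f x \<in> Fq \<and> chi2 Fq (f x * (a - 1)) = -1 \<and> (\<forall>y. f y \<noteq> x)" by (rule part3)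
  qed
  have g4: "\<forall>\<alpha>\<in>Fq. card {x\<in>C - Fq. f x = \<alpha>} = (if chi2 Fq (\<alpha> * (a - 1)) = -1 then 2 else 0)"
  proof
    fix \<alpha> assume "\<alpha> \<in> Fq"
    hence "\<alpha> ^ q = \<alpha>" by (simp add: Fq_iff)
    thus "card {x\<in>C - Fq. f x = \<alpha>} = (if chi2 Fq (\<alpha> * (a - 1)) = -1 then 2 else 0)"
      unfolding Ceq TFq by (rule part4)
  qed
  have g7: "s = 1 \<longrightarrow> (\<exists>S. fg_component f (1 / (a + 1)) = insert (1 / (a + 1)) S
          \<and> 1 / (a + 1) \<notin> S \<and> card S = 3
          \<and> (\<forall>x\<in>S. f x = 1 / (a + 1) \<and> (\<forall>y. f y \<noteq> x)))"
    by (intro impI) (rule part_s1)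
  have g8: "s \<ge> 2 \<longrightarrow> fg_iso f (fg_component f (1 / (a + 1))) cyc_tree_map (cyc_tree_verts (s + 1))"
  proof
    assume s2: "s \<ge> 2"
    obtain \<zeta> :: 'a where z: "\<zeta> ^ (2 ^ (s + 1)) = 1" "\<zeta> ^ (2 ^ s) = -1" using zeta_ex by blast
    obtain d where d: "d ^ q = d" "d \<noteq> 0" "(a - 1) * d ^ 2 = 1 / (a + 1)" using d_ex[OF s2] by blast
    have hL2: "L2 p n q s r a f Fq \<zeta> d" by (intro L2.intro[OF hL] L2_axioms.intro) (fact s2 z d)+
    interpret L2 p n q s r a f Fq \<zeta> d by (rule hL2)
    show "fg_iso f (fg_component f (1 / (a + 1))) cyc_tree_map (cyc_tree_verts (s + 1))"
      using iso unfolding cc_def .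
  qed
  show ?thesis by (intro conjI) (fact g1 g2 g3 g4 f0 part5 part6 g7 g8)+
qed

end
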